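(* Let $\Bbbk$ be a field of characteristic $0$, $n\ge3$, and let $(A,\mu,(\alpha_1,\ldots,\alpha_{n-1}))$ be an $n$-ary totally Hom-associative algebra over $\Bbbk$, with $\mu(x_1,\ldots,x_n)=(x_1\cdots x_n)$. Suppose $a\in A$ satisfies (1) $\alpha_{n-1}(a)=a$, and (2) $(x_1,\ldots,x_{n-1},a)=(x_1,\ldots,x_{n-2},a,x_{n-1})$ for all $x_i\in A$. Define the $(n-1)$-ary product $(x_1,\ldots,x_{n-1})'=(x_1,\ldots,x_{n-1},a)$. Then $A_1=(A,(\cdot)',(\alpha_1,\ldots,\alpha_{n-2}))$ is an $(n-1)$-ary totally Hom-associative algebra. Moreover, if $A$ is multiplicative, then so is $A_1$.
   Context: An $m$-ary Hom-algebra $(V,\mu,(\alpha_1,\ldots,\alpha_{m-1}))$ is a vector space $V$ with an $m$-linear map $\mu$ (written $\mu(a_1,\ldots,a_m)=(a_1\cdots a_m)$) and linear maps $\alpha_i\colon V\to V$. It is multiplicative if all $\alpha_i$ equal one map $\alpha$ and $\alpha\circ\mu=\mu\circ\alpha^{\otimes m}$. It is $m$-ary totally Hom-associative if for every $i\in\{1,\ldots,m-1\}$ and all $a_1,\ldots,a_{2m-1}$: $(\alpha_1(a_1),\ldots,\alpha_{i-1}(a_{i-1}),(a_i\cdots a_{i+m-1}),\alpha_i(a_{i+m}),\ldots,\alpha_{m-1}(a_{2m-1}))=(\alpha_1(a_1),\ldots,\alpha_i(a_i),(a_{i+1}\cdots a_{i+m}),\alpha_{i+1}(a_{i+m+1}),\ldots,\alpha_{m-1}(a_{2m-1}))$.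 *)

theory Defs
  imports Main "HOL.Vector_Spaces"
begin

text \<open>An m-ary product on 'a is modelled as a function on lists, only its values on
  lists of length m matter. The structure maps alpha_1..alpha_{m-1} are given by
  alpha :: nat => 'a => 'a, only indices 1..m-1 matter.\<close>

definition multilinear :: "('k::field \<Rightarrow> 'a::ab_group_add \<Rightarrow> 'a) \<Rightarrow> nat \<Rightarrow> ('a list \<Rightarrow> 'a) \<Rightarrow> bool" where
  "multilinear scale m mu \<longleftrightarrow>
     (\<forall>xs. length xs = m \<longrightarrow> (\<forall>i<m. Vector_Spaces.linear scale scale (\<lambda>x. mu (xs[i := x]))))"

definition hom_algebra :: "('k::field \<Rightarrow> 'a::ab_group_add \<Rightarrow> 'a) \<Rightarrow> nat \<Rightarrow> ('a list \<Rightarrow> 'a) \<Rightarrow> (nat \<Rightarrow> 'a \<Rightarrow> 'a) \<Rightarrow> bool" where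
  "hom_algebra scale m mu alpha \<longleftrightarrow>
     vector_space scale \<and> multilinear scale m mu \<and>
     (\<forall>j\<in>{1..m-1}. Vector_Spaces.linear scale scale (alpha j))"

text \<open>Total Hom-associativity; the list xs of length 2m-1 is (a_1,...,a_{2m-1}), a_j = xs!(j-1).\<close>
definition totally_hom_assoc :: "nat \<Rightarrow> ('a list \<Rightarrow> 'a) \<Rightarrow> (nat \<Rightarrow> 'a \<Rightarrow> 'a) \<Rightarrow> bool" where
  "totally_hom_assoc m mu alpha \<longleftrightarrow>
     (\<forall>i\<in>{1..m-1}. \<forall>xs. length xs = 2*m - 1 \<longrightarrow>
        mu ([alpha j (xs!(j-1)). j \<leftarrow> [1..<i]] @ [mu (take m (drop (i-1) xs))]
            @ [alpha j (xs!(j+m-1)). j \<leftarrow> [i..<m]])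
      = mu ([alpha j (xs!(j-1)). j \<leftarrow> [1..<i+1]] @ [mu (take m (drop i xs))]
            @ [alpha j (xs!(j+m-1)). j \<leftarrow> [i+1..<m]]))"

definition totally_hom_assoc_algebra :: "('k::field \<Rightarrow> 'a::ab_group_add \<Rightarrow> 'a) \<Rightarrow> nat \<Rightarrow> ('a list \<Rightarrow> 'a) \<Rightarrow> (nat \<Rightarrow> 'a \<Rightarrow> 'a) \<Rightarrow> bool" where
  "totally_hom_assoc_algebra scale m mu alpha \<longleftrightarrow>
     hom_algebra scale m mu alpha \<and> totally_hom_assoc m mu alpha"

definition multiplicative :: "nat \<Rightarrow> ('a list \<Rightarrow> 'a) \<Rightarrow> (nat \<Rightarrow> 'a \<Rightarrow> 'a) \<Rightarrow> bool" where
  "multiplicative m mu alpha \<longleftrightarrow>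
     (\<exists>f. (\<forall>j\<in>{1..m-1}. alpha j = f) \<and> (\<forall>xs. length xs = m \<longrightarrow> f (mu xs) = mu (map f xs)))"

end

theory Submission
  imports Defs
begin

lemma key:
  fixes mu :: "'a list \<Rightarrow> 'a" and alpha :: "nat \<Rightarrow> 'a \<Rightarrow> 'a"
  assumes ta: "totally_hom_assoc (k+2) mu alpha" and fa: "alpha (k+1) a = a"
    and sw: "\<forall>xs y. length xs = k \<longrightarrow> mu (xs @ [y,a]) = mu (xs @ [a,y])"
  shows "totally_hom_assoc (k+1) (\<lambda>xs. mu (xs@[a])) alpha"
  unfolding totally_hom_assoc_def
proof (intro ballI allI impI)
  fix i and xs :: "'a list"
  assume i: "i \<in> {1..k+1-1}" and len: "length xs = 2*(k+1)-1"
  define ys where "ys = take (i+k) xs @ [a] @ drop (i+k) xs @ [a]"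
  have ik: "1 \<le> i" "i \<le> k" using i by auto
  have lx: "length xs = 2*k+1" using len by simp
  have leny: "length ys = 2*(k+2)-1" using lx ik by (simp add: ys_def)
  have i2: "i \<in> {1..k+2-1}" using ik by auto
  from ta i2 leny have E:
    "mu ([alpha j (ys!(j-1)). j \<leftarrow> [1..<i]] @ [mu (take (k+2) (drop (i-1) ys))]
            @ [alpha j (ys!(j+(k+2)-1)). j \<leftarrow> [i..<k+2]])
      = mu ([alpha j (ys!(j-1)). j \<leftarrow> [1..<i+1]] @ [mu (take (k+2) (drop i ys))]
            @ [alpha j (ys!(j+(k+2)-1)). j \<leftarrow> [i+1..<k+2]])"
    unfolding totally_hom_assoc_def by blast
  have yl: "ys ! p = xs ! p" if "p < i+k" for p
    using that lx ik by (simp add: ys_def nth_append)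
  have yr: "ys ! (q+k+1) = xs ! (q+k)" if "i \<le> q" "q \<le> k" for q
  proof -
    have "ys ! (q+k+1) = (drop (i+k) xs @ [a]) ! (q - i)"
      using that lx ik by (simp add: ys_def nth_append)
    also have "\<dots> = xs ! (q+k)" using that lx ik by (auto simp add: nth_append add.commute)
    finally show ?thesis .
  qed
  have ylast: "ys ! (2*k+2) = a" using lx ik by (simp add: ys_def nth_append)
  have A: "[alpha j (ys!(j-1)). j \<leftarrow> [1..<p]] = [alpha j (xs!(j-1)). j \<leftarrow> [1..<p]]"
    if "p \<le> i+1" for p
  proof -
    have "ys!(x-1) = xs!(x-1)" if "x < p" for x using yl[of "x-1"] that \<open>p \<le> i+1\<close> ik by simp
    then show ?thesis by (intro map_cong refl) auto
  qed
  have C: "[alpha j (ys!(j+(k+2)-1)). j \<leftarrow> [p..<k+2]] = [alpha j (xs!(j+(k+1)-1)). j \<leftarrow> [p..<k+1]] @ [a]"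
    if "i \<le> p" "p \<le> k+1" for p
  proof -
    have "[p..<k+2] = [p..<k+1] @ [k+1]" using that by simp
    moreover have "[alpha j (ys!(j+(k+2)-1)). j \<leftarrow> [p..<k+1]] = [alpha j (xs!(j+(k+1)-1)). j \<leftarrow> [p..<k+1]]"
    proof -
      have "ys!(x+(k+2)-1) = xs!(x+(k+1)-1)" if "x \<in> set [p..<k+1]" for x
        using yr[of x] that \<open>i \<le> p\<close> by (auto simp add: add.assoc)
      then show ?thesis by (intro map_cong refl) auto
    qed
    moreover have "alpha (k+1) (ys ! (k+1+(k+2)-1)) = a"
      using ylast fa by (simp add: mult_2)
    ultimately show ?thesis by simp
  qed
  have B1: "take (k+2) (drop (i-1) ys) = take (k+1) (drop (i-1) xs) @ [a]"
    using lx ik by (simp add: ys_def take_drop min_def add.commute)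
  have B2: "mu (take (k+2) (drop i ys)) = mu (take (k+1) (drop i xs) @ [a])"
  proof -
    have "take (k+2) (drop i ys) = drop i (take (i+k) xs) @ [a, xs!(i+k)]"
      using lx ik by (simp add: ys_def take_drop min_def hd_drop_conv_nth take_Suc_conv_app_nth)
    moreover have "take (k+1) (drop i xs) = drop i (take (i+k) xs) @ [xs!(i+k)]"
      using lx ik by (simp add: take_drop take_Suc_conv_app_nth add.commute)
    moreover have "length (drop i (take (i+k) xs)) = k" using lx ik by simp
    ultimately show ?thesis using sw by simp
  qed
  have G: "mu ([alpha j (xs!(j-1)). j \<leftarrow> [1..<i]] @ [mu (take (k+1) (drop (i-1) xs) @ [a])]
            @ [alpha j (xs!(j+(k+1)-1)). j \<leftarrow> [i..<k+1]] @ [a])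
      = mu ([alpha j (xs!(j-1)). j \<leftarrow> [1..<i+1]] @ [mu (take (k+1) (drop i xs) @ [a])]
            @ [alpha j (xs!(j+(k+1)-1)). j \<leftarrow> [i+1..<k+1]] @ [a])"
  proof -
    have a1: "i \<le> i+1" "i+1 \<le> i+1" "i \<le> i" "i \<le> k+1" "i+1 \<le> k+1" using ik by auto
    show ?thesis using E unfolding A[OF a1(1)] A[OF a1(2)] C[OF a1(3) a1(4)] C[OF a1(1) a1(5)] B1 B2
      by (simp only: append_assoc)
  qed
  then show "(\<lambda>xs. mu (xs@[a])) ([alpha j (xs!(j-1)). j \<leftarrow> [1..<i]] @ [(\<lambda>xs. mu (xs@[a])) (take (k+1) (drop (i-1) xs))]
            @ [alpha j (xs!(j+(k+1)-1)). j \<leftarrow> [i..<k+1]])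
      = (\<lambda>xs. mu (xs@[a])) ([alpha j (xs!(j-1)). j \<leftarrow> [1..<i+1]] @ [(\<lambda>xs. mu (xs@[a])) (take (k+1) (drop i xs))]
            @ [alpha j (xs!(j+(k+1)-1)). j \<leftarrow> [i+1..<k+1]])"
    by (simp only: append_assoc)
qed


theorem theorem3p4:
  fixes scale :: "'k::field_char_0 \<Rightarrow> 'a::ab_group_add \<Rightarrow> 'a"
    and mu :: "'a list \<Rightarrow> 'a" and alpha :: "nat \<Rightarrow> 'a \<Rightarrow> 'a"
    and n :: nat and a :: 'a
  assumes "n \<ge> 3"
    and "totally_hom_assoc_algebra scale n mu alpha"
    and "alpha (n-1) a = a"
    and "\<forall>xs y. length xs = n - 2 \<longrightarrow> mu (xs @ [y, a]) = mu (xs @ [a, y])"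
  shows "totally_hom_assoc_algebra scale (n-1) (\<lambda>xs. mu (xs @ [a])) alpha
         \<and> (multiplicative n mu alpha \<longrightarrow> multiplicative (n-1) (\<lambda>xs. mu (xs @ [a])) alpha)"
proof -
  define k where "k = n - 2"
  have nk: "n = k+2" "n - 1 = k+1" using assms(1) by (auto simp: k_def)
  have vs: "vector_space scale" and ml: "multilinear scale n mu"
    and lin: "\<forall>j\<in>{1..n-1}. Vector_Spaces.linear scale scale (alpha j)"
    and ta: "totally_hom_assoc n mu alpha"
    using assms(2) unfolding totally_hom_assoc_algebra_def hom_algebra_def by auto
  have ml': "multilinear scale (n-1) (\<lambda>xs. mu (xs @ [a]))"
    unfolding multilinear_def
  proof (intro allI impI)
    fix xs :: "'a list" and i assume l: "length xs = n - 1" and i: "i < n - 1"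
    have "length (xs @ [a]) = n" "i < n" using l i nk by auto
    then have "Vector_Spaces.linear scale scale (\<lambda>x. mu ((xs @ [a])[i := x]))"
      using ml unfolding multilinear_def by blast
    moreover have "(\<lambda>x. mu ((xs @ [a])[i := x])) = (\<lambda>x. mu (xs[i := x] @ [a]))"
      using l i by (simp add: list_update_append1)
    ultimately show "Vector_Spaces.linear scale scale (\<lambda>x. mu (xs[i := x] @ [a]))" by simp
  qed
  have lin': "\<forall>j\<in>{1..n-1-1}. Vector_Spaces.linear scale scale (alpha j)" using lin by auto
  have ta': "totally_hom_assoc (n-1) (\<lambda>xs. mu (xs @ [a])) alpha"
  proof -
    have "totally_hom_assoc (k+2) mu alpha" using ta nk by simp
    moreover have "alpha (k+1) a = a" using assms(3) nk by simp
    moreover have "\<forall>xs y. length xs = k \<longrightarrow> mu (xs @ [y,a]) = mu (xs @ [a,y])"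
      using assms(4) by (simp add: k_def)
    ultimately show ?thesis unfolding nk(2) by (rule key)
  qed
  have mult: "multiplicative (n-1) (\<lambda>xs. mu (xs @ [a])) alpha" if m: "multiplicative n mu alpha"
  proof -
    from m obtain f where f1: "\<forall>j\<in>{1..n-1}. alpha j = f"
      and f2: "\<forall>xs. length xs = n \<longrightarrow> f (mu xs) = mu (map f xs)"
      unfolding multiplicative_def by blast
    have fa: "f a = a" using f1 assms(3) nk by auto
    show ?thesis unfolding multiplicative_def
    proof (intro exI conjI ballI allI impI)
      show "\<And>j. j \<in> {1..n-1-1} \<Longrightarrow> alpha j = f" using f1 by auto
      fix xs :: "'a list" assume "length xs = n - 1"
      then have "f (mu (xs @ [a])) = mu (map f (xs @ [a]))" using f2 nk by auto
      then show "f (mu (xs @ [a])) = mu (map f xs @ [a])" using fa by simp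
    qed
  qed
  show ?thesis using vs ml' lin' ta' mult
    unfolding totally_hom_assoc_algebra_def hom_algebra_def by blast
qed

end
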